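(* Let $\mathcal O$ be a cyclic operad and $n\ge1$. Then $\psi_n\circ\phi_n = M_n$ as maps $\mathcal{OG}\to\mathcal{OG}$.
   Context: Work over $\mathbb R$. $\mathcal O$ is a cyclic operad; for $m\ge 2$, $\mathcal S[m]=(\bigoplus_L\mathcal O[m-1])_{\Sigma_m}$ is the space of $\mathcal O$-spiders with $m$ legs (sum over labelings $L$ of the legs of an $m$-star by $\{0,\dots,m-1\}$). An orientation of a graph (finite 1-dimensional CW complex) is an ordering of its vertices plus a direction on each edge, up to even numbers of vertex transpositions and edge reversals. An $\mathcal O$-graph is an oriented graph without univalent vertices whose vertices are colored by $\mathcal O$-spiders with legs identified with the incident half-edges; $\mathcal{OG}$ is spanned by $\mathcal O$-graphs modulo $(\mathbf X,or)=-(\mathbf X,-or)$ and linearity in each vertex coloring. Let $V_n=\mathbb R^{2n}$ with basis $B_n=\{p_1,\dots,p_n,q_1,\dots,q_n\}$ and standard symplectic form $\omega$ ($\omega(p_i,q_j)=\delta_{ij}=-\omega(q_j,p_i)$, others $0$). $\mathfrak a\mathcal O_n=\bigoplus_{m\ge2}(\mathcal S[m]\otimes V_n^{\otimes m})_{\Sigma_m}$, spanned by symplecto-spiders (spiders with a vector of $V_n$ on each leg). $\phi_n:\mathcal{OG}\to\wedge\mathfrak a\mathcal O_n$: fix a representative of the orientation of $\mathbf X$ (vertex order, edge directions). A state $s$ assigns an element of $B_n$ to each half-edge so that the two half-edges of each edge receive $p_i$ and $q_i$ for some $i$; the sign of an edge is $+1$ if its initial half-edge gets $p_i$ and $-1$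 if it gets $q_i$, and $\sigma(s)$ is the product of the edge signs. Cutting every edge at its midpoint gives symplecto-spiders $\mathbf s_1,\dots,\mathbf s_k$ indexed by the vertex order; $\mathbf X\{s\}=\mathbf s_1\wedge\cdots\wedge\mathbf s_k$ and $\phi_n(\mathbf X)=\sum_s\sigma(s)\mathbf X\{s\}$. $\psi_n:\wedge\mathfrak a\mathcal O_n\to\mathcal{OG}$: for a pairing $\pi$ of all legs of $\mathbf s_1,\dots,\mathbf s_k$, glue legs according to $\pi$ to get an $\mathcal O$-graph $(\mathbf s_1\wedge\cdots\wedge\mathbf s_k)^\pi$ with vertex $j$ colored by the spider of $\mathbf s_j$, vertices ordered $1,\dots,k$, and edges directed arbitrarily; the weight of an edge is $\omega(v_1,v_2)$ where $v_1,v_2$ are the vectors on its initial and terminal half-edges, and $w(\pi)$ is the product of the weights (the product $w(\pi)(\cdots)^\pi$ is independent of the edge directions). $\psi_n(\mathbf s_1\wedge\cdots\wedge\mathbf s_k)=\sum_\pi w(\pi)(\mathbf s_1\wedge\cdots\wedge\mathbf s_k)^\pi$. $M_n:\mathcal{OG}\to\mathcal{OG}$: for a pairing $\pi$ of the half-edges $H(X)$, $X^\pi$ is obtained by cutting all edges and regluing according to $\pi$. The union of the chord diagrams of $\pi$ and of the standard pairing $\{x,\bar x\}$ is a union $C(\pi)$ of circles with $c(\pi)$ components; choosing a representative orientation of $X$ whose edge directions are coherent around each circle, edges of $X^\pi$ get the induced directions and vertices keep their order, giving the $\mathcal O$-graph $\mathbf X^\pi$. $M_n(\mathbf X)=\sum_\pi(2n)^{c(\pi)}\mathbf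 X^\pi$. *)

theory Defs
  imports Complex_Main "HOL-Combinatorics.Permutations" "HOL-Library.FuncSet"
begin

text \<open>The components O[r] of the operad are modelled as real subspaces
 O r of an ambient real vector space 'v.  For m legs, Op (m-1) carries the
 action of the permutations of the leg labels {0..m-1} (the cyclic structure):
 act m sigma x.  Only this structure enters the definitions of phi_n, psi_n, M_n.\<close>

definition cyclic_sigma_module ::
  "(nat \<Rightarrow> 'v::real_vector set) \<Rightarrow> (nat \<Rightarrow> (nat \<Rightarrow> nat) \<Rightarrow> 'v \<Rightarrow> 'v) \<Rightarrow> bool" where
  "cyclic_sigma_module Op act \<longleftrightarrow>
     (\<forall>m\<ge>2. subspace (Op (m - 1))
        \<and> (\<forall>x\<in>Op (m - 1). act m id x = x)
        \<and> (\<forall>\<sigma>. \<sigma> permutes {..<m} \<longrightarrow>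
              (\<forall>x\<in>Op (m - 1). act m \<sigma> x \<in> Op (m - 1))
            \<and> (\<forall>x\<in>Op (m - 1). \<forall>y\<in>Op (m - 1). \<forall>a b.
                  act m \<sigma> (a *\<^sub>R x + b *\<^sub>R y) = a *\<^sub>R act m \<sigma> x + b *\<^sub>R act m \<sigma> y)
            \<and> (\<forall>\<rho>. \<rho> permutes {..<m} \<longrightarrow>
                  (\<forall>x\<in>Op (m - 1). act m (\<sigma> \<circ> \<rho>) x = act m \<sigma> (act m \<rho> x)))))"

text \<open>A representative: half-edges {..<og_nhe}, vertices {..<og_nv} (the vertex
 order is the numbering), directed edges og_edges as pairs (initial, terminal)
 of half-edges, og_att h = vertex of half-edge h, og_lab h = label of the leg h
 of the spider at its vertex, og_col v = element of O[m-1] colouring vertex v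
 (m its valence); (og_lab, og_col) at v is a representative of an element
 of S[m] (summand indexed by the labelling).\<close>

record 'v ograph =
  og_nhe :: nat
  og_nv :: nat
  og_edges :: "(nat \<times> nat) set"
  og_att :: "nat \<Rightarrow> nat"
  og_lab :: "nat \<Rightarrow> nat"
  og_col :: "nat \<Rightarrow> 'v"

definition og_deg :: "'v ograph \<Rightarrow> nat \<Rightarrow> nat" where
  "og_deg X v = card {h. h < og_nhe X \<and> og_att X h = v}"

definition edge_structure :: "nat \<Rightarrow> (nat \<times> nat) set \<Rightarrow> bool" where
  "edge_structure N E \<longleftrightarrow>
     (\<forall>(a, b)\<in>E. a < N \<and> b < N \<and> a \<noteq> b)
     \<and> (\<forall>h<N. \<exists>!e. e \<in> E \<and> (fst e = h \<or> snd e = h))"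

definition valid_ograph :: "(nat \<Rightarrow> 'v set) \<Rightarrow> 'v ograph \<Rightarrow> bool" where
  "valid_ograph Op X \<longleftrightarrow>
     edge_structure (og_nhe X) (og_edges X)
     \<and> (\<forall>h<og_nhe X. og_att X h < og_nv X)
     \<and> (\<forall>v<og_nv X. 2 \<le> og_deg X v
          \<and> bij_betw (og_lab X) {h. h < og_nhe X \<and> og_att X h = v} {..<og_deg X v}
          \<and> og_col X v \<in> Op (og_deg X v - 1))"

text \<open>G' is isomorphic to G via a bijection beta of half-edges and a
 renumbering tau of the vertices (tau changes the vertex order).\<close>
definition og_iso_with ::
  "(nat \<Rightarrow> nat) \<Rightarrow> (nat \<Rightarrow> nat) \<Rightarrow> 'v ograph \<Rightarrow> 'v ograph \<Rightarrow> bool" where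
  "og_iso_with \<beta> \<tau> G G' \<longleftrightarrow>
     og_nhe G' = og_nhe G \<and> og_nv G' = og_nv G
     \<and> \<beta> permutes {..<og_nhe G} \<and> \<tau> permutes {..<og_nv G}
     \<and> og_edges G' = map_prod \<beta> \<beta> ` og_edges G
     \<and> (\<forall>h<og_nhe G. og_att G' (\<beta> h) = \<tau> (og_att G h) \<and> og_lab G' (\<beta> h) = og_lab G h)
     \<and> (\<forall>v<og_nv G. og_col G' (\<tau> v) = og_col G v)"

definition reverse_edge :: "nat \<times> nat \<Rightarrow> 'v ograph \<Rightarrow> 'v ograph" where
  "reverse_edge e G = G\<lparr>og_edges := (og_edges G - {e}) \<union> {prod.swap e}\<rparr>"

definition relabel_spider ::
  "(nat \<Rightarrow> (nat \<Rightarrow> nat) \<Rightarrow> 'v \<Rightarrow> 'v) \<Rightarrow> nat \<Rightarrow> (nat \<Rightarrow> nat) \<Rightarrow> 'v ograph \<Rightarrow> 'v ograph" where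
  "relabel_spider act v \<sigma> G =
     G\<lparr>og_lab := (\<lambda>h. if h < og_nhe G \<and> og_att G h = v then \<sigma> (og_lab G h) else og_lab G h),
       og_col := (og_col G)(v := act (og_deg G v) \<sigma> (og_col G v))\<rparr>"

definition recolor :: "nat \<Rightarrow> 'v \<Rightarrow> 'v ograph \<Rightarrow> 'v ograph" where
  "recolor v x G = G\<lparr>og_col := (og_col G)(v := x)\<rparr>"

text \<open>F : O-graph representatives \<Rightarrow> 'w factors through OG (F respects
 isomorphism, (X,or) = -(X,-or), the coinvariants defining S[m], and is
 linear in each vertex colouring).  Two elements of OG coincide iff all such
 F (for all real vector spaces 'w) agree on them.\<close>
definition respects_OG ::
  "(nat \<Rightarrow> 'v::real_vector set) \<Rightarrow> (nat \<Rightarrow> (nat \<Rightarrow> nat) \<Rightarrow> 'v \<Rightarrow> 'v)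
     \<Rightarrow> ('v ograph \<Rightarrow> 'w::real_vector) \<Rightarrow> bool" where
  "respects_OG Op act F \<longleftrightarrow>
     (\<forall>G G' \<beta> \<tau>. valid_ograph Op G \<and> valid_ograph Op G' \<and> og_iso_with \<beta> \<tau> G G'
         \<longrightarrow> F G' = of_int (sign \<tau>) *\<^sub>R F G)
   \<and> (\<forall>G e. valid_ograph Op G \<and> e \<in> og_edges G \<longrightarrow> F (reverse_edge e G) = - F G)
   \<and> (\<forall>G v \<sigma>. valid_ograph Op G \<and> v < og_nv G \<and> \<sigma> permutes {..<og_deg G v}
         \<longrightarrow> F (relabel_spider act v \<sigma> G) = F G)
   \<and> (\<forall>G v x y a b. valid_ograph Op G \<and> v < og_nv G
         \<and> x \<in> Op (og_deg G v - 1) \<and> y \<in> Op (og_deg G v - 1)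
         \<longrightarrow> F (recolor v (a *\<^sub>R x + b *\<^sub>R y) G)
             = a *\<^sub>R F (recolor v x G) + b *\<^sub>R F (recolor v y G))"

text \<open>Basis B_n of V_n: (i, True) is p_(i+1), (i, False) is q_(i+1), i < n.\<close>
definition sbasis :: "nat \<Rightarrow> (nat \<times> bool) set" where
  "sbasis n = {..<n} \<times> UNIV"

definition omega :: "nat \<times> bool \<Rightarrow> nat \<times> bool \<Rightarrow> real" where
  "omega x y = (if fst x = fst y \<and> snd x \<and> \<not> snd y then 1
                else if fst x = fst y \<and> \<not> snd x \<and> snd y then -1 else 0)"

definition states :: "nat \<Rightarrow> 'v ograph \<Rightarrow> (nat \<Rightarrow> nat \<times> bool) set" where
  "states n X = {s \<in> {..<og_nhe X} \<rightarrow>\<^sub>E sbasis n.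
      \<forall>(a, b)\<in>og_edges X. \<exists>i<n. (s a = (i, True) \<and> s b = (i, False))
                                \<or> (s a = (i, False) \<and> s b = (i, True))}"

definition state_sign :: "'v ograph \<Rightarrow> (nat \<Rightarrow> nat \<times> bool) \<Rightarrow> real" where
  "state_sign X s = (\<Prod>(a, b)\<in>og_edges X. if snd (s a) then 1 else -1)"

definition pairings :: "nat \<Rightarrow> (nat \<Rightarrow> nat) set" where
  "pairings N = {\<pi> \<in> {..<N} \<rightarrow>\<^sub>E {..<N}. \<forall>h<N. \<pi> h \<noteq> h \<and> \<pi> (\<pi> h) = h}"

text \<open>Edges of a pairing, each directed from the smaller half-edge (an
 arbitrary choice; psi does not depend on it).\<close>
definition pairing_edges_min :: "nat \<Rightarrow> (nat \<Rightarrow> nat) \<Rightarrow> (nat \<times> nat) set" where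
  "pairing_edges_min N \<pi> = {(a, \<pi> a) | a. a < N \<and> a < \<pi> a}"

text \<open>psi_n(phi_n(X)) = sum_s sigma(s) sum_pi w(pi) (X{s})^pi, where
 (X{s})^pi has the vertices (with order and spiders) of X and edges given by pi.\<close>
definition psi_phi ::
  "nat \<Rightarrow> ('v ograph \<Rightarrow> 'w::real_vector) \<Rightarrow> 'v ograph \<Rightarrow> 'w" where
  "psi_phi n F X =
     (\<Sum>s\<in>states n X. state_sign X s *\<^sub>R
        (\<Sum>\<pi>\<in>pairings (og_nhe X).
           (\<Prod>(a, b)\<in>pairing_edges_min (og_nhe X) \<pi>. omega (s a) (s b))
             *\<^sub>R F (X\<lparr>og_edges := pairing_edges_min (og_nhe X) \<pi>\<rparr>)))"

definition partner :: "(nat \<times> nat) set \<Rightarrow> nat \<Rightarrow> nat" where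
  "partner E h = (THE h'. (h, h') \<in> E \<or> (h', h) \<in> E)"

text \<open>c(pi): number of circles of the union of the chord diagrams of pi and of
 the standard pairing (the edges of X).\<close>
definition num_circles :: "nat \<Rightarrow> (nat \<times> nat) set \<Rightarrow> (nat \<Rightarrow> nat) \<Rightarrow> nat" where
  "num_circles N E \<pi> =
     card ({..<N} // ({(h, partner E h) | h. h < N} \<union> {(h, \<pi> h) | h. h < N})\<^sup>*)"

definition reverse_edges :: "(nat \<times> nat) set \<Rightarrow> (nat \<times> nat) set \<Rightarrow> (nat \<times> nat) set" where
  "reverse_edges R E = (E - R) \<union> prod.swap ` R"

text \<open>Edge directions E are coherent around every circle of C(pi) iff each
 pi-chord joins an initial and a terminal half-edge.\<close>
definition coherent :: "nat \<Rightarrow> (nat \<times> nat) set \<Rightarrow> (nat \<Rightarrow> nat) \<Rightarrow> bool" where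
  "coherent N E \<pi> \<longleftrightarrow> (\<forall>h<N. h \<in> fst ` E \<longleftrightarrow> \<pi> h \<notin> fst ` E)"

definition coherent_reversal :: "'v ograph \<Rightarrow> (nat \<Rightarrow> nat) \<Rightarrow> (nat \<times> nat) set" where
  "coherent_reversal X \<pi> =
     (SOME R. R \<subseteq> og_edges X \<and> coherent (og_nhe X) (reverse_edges R (og_edges X)) \<pi>)"

text \<open>Induced directions: the edge {a, pi a} of X^pi goes from the half-edge
 which is initial (in the coherent orientation) to the one which is terminal.\<close>
definition induced_edges :: "nat \<Rightarrow> (nat \<times> nat) set \<Rightarrow> (nat \<Rightarrow> nat) \<Rightarrow> (nat \<times> nat) set" where
  "induced_edges N E \<pi> = {(a, \<pi> a) | a. a < N \<and> a \<in> fst ` E}"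

text \<open>The bold X^pi, written with the vertex order of X: reversing the
 edges in R changes the orientation by (-1)^|R|.\<close>
definition M_op :: "nat \<Rightarrow> ('v ograph \<Rightarrow> 'w::real_vector) \<Rightarrow> 'v ograph \<Rightarrow> 'w" where
  "M_op n F X =
     (\<Sum>\<pi>\<in>pairings (og_nhe X).
        let R = coherent_reversal X \<pi> in
        ((2 * real n) ^ num_circles (og_nhe X) (og_edges X) \<pi> * (-1) ^ card R)
          *\<^sub>R F (X\<lparr>og_edges := induced_edges (og_nhe X) (reverse_edges R (og_edges X)) \<pi>\<rparr>))"

end

theory Submission
  imports Defs
begin



lemma two_col_aux:
  "finite S \<Longrightarrow> card S = k \<Longrightarrow> (\<forall>h\<in>S. p h \<in> S \<and> p h \<noteq> h \<and> p (p h) = h) \<Longrightarrow>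
   (\<forall>h\<in>S. q h \<in> S \<and> q h \<noteq> h \<and> q (q h) = h) \<Longrightarrow>
   \<exists>c::nat\<Rightarrow>bool. \<forall>h\<in>S. c (p h) \<noteq> c h \<and> c (q h) \<noteq> c h"
proof (induction k arbitrary: S q rule: less_induct)
  case (less k)
  show ?case
  proof (cases "S = {}")
    case True then show ?thesis by auto
  next
    case False
    then obtain a where aS: "a \<in> S" by auto
    define b where "b = p a"
    have bS: "b \<in> S" and ab: "a \<noteq> b" and pb: "p b = a" using less.prems aS b_def by auto
    define S' where "S' = S - {a, b}"
    have fS': "finite S'" using less.prems S'_def by auto
    have cS': "card S' < k" using less.prems aS bS S'_def
      by (metis Diff_insert2 card_Diff2_less)
    have pS': "\<forall>h\<in>S'. p h \<in> S' \<and> p h \<noteq> h \<and> p (p h) = h"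
    proof
      fix h assume h: "h \<in> S'"
      then have hS: "h\<in>S" "h\<noteq>a" "h\<noteq>b" by (auto simp: S'_def)
      have pp: "p (p h) = h" "p h \<in> S" "p h \<noteq> h" using less.prems(3) hS by auto
      have "p h \<noteq> a" "p h \<noteq> b" using pp hS pb b_def by metis+
      then show "p h \<in> S' \<and> p h \<noteq> h \<and> p (p h) = h" using pp by (auto simp: S'_def)
    qed
    show ?thesis
    proof (cases "q a = b")
      case True
      have qb: "q b = a" using True less.prems aS by metis
      have qS': "\<forall>h\<in>S'. q h \<in> S' \<and> q h \<noteq> h \<and> q (q h) = h"
      proof
        fix h assume h: "h \<in> S'"
        then have hS: "h\<in>S" "h\<noteq>a" "h\<noteq>b" by (auto simp: S'_def)
        have pp: "q (q h) = h" "q h \<in> S" "q h \<noteq> h" using less.prems(4) hS by auto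
        have "q h \<noteq> a" "q h \<noteq> b" using pp hS qb True by metis+
        then show "q h \<in> S' \<and> q h \<noteq> h \<and> q (q h) = h" using pp by (auto simp: S'_def)
      qed
      obtain c' :: "nat \<Rightarrow> bool" where c': "\<forall>h\<in>S'. c' (p h) \<noteq> c' h \<and> c' (q h) \<noteq> c' h"
        using less.IH[OF cS' fS' refl pS' qS'] by blast
      define c where "c = c'(a := True, b := False)"
      have "\<forall>h\<in>S. c (p h) \<noteq> c h \<and> c (q h) \<noteq> c h"
      proof
        fix h assume hS: "h \<in> S"
        show "c (p h) \<noteq> c h \<and> c (q h) \<noteq> c h"
        proof (cases "h \<in> S'")
          case True
          then show ?thesis using c' pS' qS' S'_def c_def by auto
        next
          case False
          then have "h = a \<or> h = b" using hS S'_def by auto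
          then show ?thesis using ab c_def b_def pb True qb by auto
        qed
      qed
      then show ?thesis by blast
    next
      case False
      define a' where "a' = q a"
      define b' where "b' = q b"
      have a'S: "a' \<in> S" and b'S: "b' \<in> S" using less.prems aS bS a'_def b'_def by auto
      have qa': "q a' = a" and qb': "q b' = b" using less.prems aS bS a'_def b'_def by auto
      have d1: "a' \<noteq> a" "a' \<noteq> b" "b' \<noteq> b" "b' \<noteq> a" "a' \<noteq> b'"
        using less.prems aS bS a'_def b'_def False ab qa' qb' by metis+
      define q' where "q' = q(a' := b', b' := a')"
      have qS': "\<forall>h\<in>S'. q' h \<in> S' \<and> q' h \<noteq> h \<and> q' (q' h) = h"
      proof
        fix h assume hS': "h \<in> S'"
        show "q' h \<in> S' \<and> q' h \<noteq> h \<and> q' (q' h) = h"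
        proof (cases "h = a' \<or> h = b'")
          case True
          then show ?thesis using d1 q'_def S'_def a'S b'S by auto
        next
          case False
          have "q h \<in> S" "q h \<noteq> h" "q (q h) = h" using less.prems hS' S'_def by auto
          moreover have "q h \<noteq> a" "q h \<noteq> b" "q h \<noteq> a'" "q h \<noteq> b'"
            using False hS' qa' qb' a'_def b'_def \<open>q (q h) = h\<close> unfolding S'_def by (metis DiffE insertCI)+
          ultimately show ?thesis using False q'_def S'_def by auto
        qed
      qed
      obtain c' :: "nat \<Rightarrow> bool" where c': "\<forall>h\<in>S'. c' (p h) \<noteq> c' h \<and> c' (q' h) \<noteq> c' h"
        using less.IH[OF cS' fS' refl pS' qS'] by blast
      have a'S': "a' \<in> S'" and b'S': "b' \<in> S'" using a'S b'S d1 S'_def by auto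
      have "q' a' = b'" using q'_def d1 by auto
      then have ca'b': "c' a' \<noteq> c' b'" using c' a'S' by metis
      define c where "c = c'(a := \<not> c' a', b := \<not> c' b')"
      have "\<forall>h\<in>S. c (p h) \<noteq> c h \<and> c (q h) \<noteq> c h"
      proof
        fix h assume hS: "h \<in> S"
        show "c (p h) \<noteq> c h \<and> c (q h) \<noteq> c h"
        proof (cases "h \<in> S'")
          case True
          have ph: "p h \<in> S'" using pS' True by auto
          have "c (p h) = c' (p h)" "c h = c' h" using ph True by (auto simp: c_def S'_def)
          then have "c (p h) \<noteq> c h" using c' True by auto
          moreover have "c (q h) \<noteq> c h"
          proof (cases "h = a' \<or> h = b'")
            case True
            then have "h \<noteq> a" "h \<noteq> b" "c h = c' h" using d1 by (auto simp: c_def)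
            with True show ?thesis using qa' qb' ca'b' ab by (auto simp: c_def)
          next
            case False
            then have "q' h = q h" using q'_def by auto
            moreover have "q' h \<in> S'" using qS' \<open>h \<in> S'\<close> by auto
            ultimately have "c (q h) = c' (q' h)" "c h = c' h" using \<open>h \<in> S'\<close> by (auto simp: c_def S'_def)
            then show ?thesis using c' \<open>h \<in> S'\<close> by auto
          qed
          ultimately show ?thesis by blast
        next
          case False
          then have "h = a \<or> h = b" using hS S'_def by auto
          moreover have "q a = a'" "q b = b'" using a'_def b'_def by auto
          moreover have "c a = (\<not> c' a')" "c b = (\<not> c' b')" "c a' = c' a'" "c b' = c' b'"
            using ab d1 by (auto simp: c_def)
          moreover have "p a = b" using b_def by simp
          ultimately show ?thesis using pb ca'b' by auto
        qed
      qed
      then show ?thesis by blast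
    qed
  qed
qed




lemma count_classes:
  fixes A :: "'a set" and B :: "'b set"
  assumes fA: "finite A" and relA: "rel \<subseteq> A \<times> A" and sr: "sym rel"
  shows "card {t\<in>A \<rightarrow>\<^sub>E B. \<forall>(x,y)\<in>rel. t x = t y} = card B ^ card (A // rel\<^sup>*)"
proof -
  define r where "r = rel\<^sup>*"
  define T where "T = {t\<in>A \<rightarrow>\<^sub>E B. \<forall>(x,y)\<in>rel. t x = t y}"
  have cls: "r``{x} \<subseteq> A" if "x \<in> A" for x
  proof
    fix y assume "y \<in> r``{x}"
    then have "(x,y) \<in> rel\<^sup>*" by (simp add: r_def)
    then show "y \<in> A" using that relA by (induction rule: rtrancl_induct) auto
  qed
  have symr: "sym r" unfolding r_def using sr by (rule sym_rtrancl)
  have transr: "trans r" unfolding r_def by (rule trans_rtrancl)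
  have same: "r``{x} = r``{y}" if "(x,y) \<in> r" for x y
    using symr transr that unfolding sym_def trans_def by blast
  have self: "x \<in> r``{x}" for x by (simp add: r_def)
  have const: "t x = t y" if "t \<in> T" "(x,y) \<in> r" for t x y
  proof -
    have "(x,y) \<in> rel\<^sup>*" using that by (simp add: r_def)
    then show ?thesis using that(1) by (induction rule: rtrancl_induct) (auto simp: T_def)
  qed
  have Qsub: "A // r \<subseteq> Pow A"
  proof
    fix C assume "C \<in> A // r"
    then obtain x where "x \<in> A" "C = r``{x}" by (elim quotientE) blast
    then show "C \<in> Pow A" using cls by simp
  qed
  have fQ: "finite (A // r)" by (rule finite_subset[OF Qsub]) (simp add: fA)
  have rep: "(SOME y. y \<in> C) \<in> A \<and> r``{SOME y. y \<in> C} = C" if CQ: "C \<in> A // r" for C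
  proof -
    obtain x where x: "x \<in> A" "C = r``{x}" using CQ by (elim quotientE) blast
    define y where "y = (SOME y. y \<in> C)"
    have "y \<in> C" unfolding y_def using self x by (metis someI_ex)
    then have "y \<in> A" "(x,y) \<in> r" using cls x by auto
    then have "r``{y} = C" using same[OF \<open>(x,y) \<in> r\<close>] x(2) by simp
    then show ?thesis using \<open>y \<in> A\<close> by (simp add: y_def)
  qed
  define \<Psi> where "\<Psi> g = restrict (\<lambda>h. g (r``{h})) A" for g :: "'a set \<Rightarrow> 'b"
  define \<Phi> where "\<Phi> t = restrict (\<lambda>C. t (SOME x. x \<in> C)) (A // r)" for t :: "'a \<Rightarrow> 'b"
  have "bij_betw \<Psi> (A // r \<rightarrow>\<^sub>E B) T"
  proof (rule bij_betw_byWitness[where f' = \<Phi>])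
    show "\<forall>g\<in>A // r \<rightarrow>\<^sub>E B. \<Phi> (\<Psi> g) = g"
    proof
      fix g assume g: "g \<in> A // r \<rightarrow>\<^sub>E B"
      show "\<Phi> (\<Psi> g) = g"
      proof (rule PiE_ext[OF _ g])
        show "\<Phi> (\<Psi> g) \<in> A // r \<rightarrow>\<^sub>E B"
        proof
          fix C assume "C \<in> A // r"
          then have "(SOME y. y \<in> C) \<in> A" "r``{SOME y. y \<in> C} = C" using rep by auto
          then show "\<Phi> (\<Psi> g) C \<in> B" using g \<open>C \<in> A // r\<close> by (auto simp: \<Phi>_def \<Psi>_def)
        next
          fix C assume "C \<notin> A // r" then show "\<Phi> (\<Psi> g) C = undefined" by (simp add: \<Phi>_def)
        qed
        fix C assume "C \<in> A // r"
        then have "(SOME y. y \<in> C) \<in> A" "r``{SOME y. y \<in> C} = C" using rep by auto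
        then show "\<Phi> (\<Psi> g) C = g C" using \<open>C \<in> A // r\<close> by (auto simp: \<Phi>_def \<Psi>_def)
      qed
    qed
    show "\<forall>t\<in>T. \<Psi> (\<Phi> t) = t"
    proof
      fix t assume t: "t \<in> T"
      show "\<Psi> (\<Phi> t) = t"
      proof
        fix h
        show "\<Psi> (\<Phi> t) h = t h"
        proof (cases "h \<in> A")
          case True
          have Q: "r``{h} \<in> A // r" using True unfolding quotient_def by auto
          have "(SOME y. y \<in> r``{h}) \<in> r``{h}" using self by (metis someI_ex)
          then have "t (SOME y. y \<in> r``{h}) = t h" using const[OF t] symr
            by (auto simp: sym_def)
          then show ?thesis using True Q by (simp add: \<Psi>_def \<Phi>_def)
        next
          case False
          then show ?thesis using t by (auto simp: \<Psi>_def T_def PiE_def extensional_def)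
        qed
      qed
    qed
    show "\<Psi> ` (A // r \<rightarrow>\<^sub>E B) \<subseteq> T"
    proof
      fix u assume "u \<in> \<Psi> ` (A // r \<rightarrow>\<^sub>E B)"
      then obtain g where g: "g \<in> A // r \<rightarrow>\<^sub>E B" "u = \<Psi> g" by auto
      have "u \<in> A \<rightarrow>\<^sub>E B"
      proof
        fix h assume "h \<in> A"
        then have "r``{h} \<in> A // r" unfolding quotient_def by auto
        then show "u h \<in> B" using g \<open>h \<in> A\<close> by (auto simp: \<Psi>_def)
      next
        fix h assume "h \<notin> A" then show "u h = undefined" using g by (simp add: \<Psi>_def)
      qed
      moreover have "\<forall>(x,y)\<in>rel. u x = u y"
      proof (clarify)
        fix x y assume xy: "(x,y) \<in> rel"
        then have "x \<in> A" "y \<in> A" "(x,y) \<in> r" using relA by (auto simp: r_def)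
        then have "r``{x} = r``{y}" using same by blast
        then show "u x = u y" using g \<open>x \<in> A\<close> \<open>y \<in> A\<close> by (simp add: \<Psi>_def)
      qed
      ultimately show "u \<in> T" by (simp add: T_def)
    qed
    show "\<Phi> ` T \<subseteq> A // r \<rightarrow>\<^sub>E B"
    proof
      fix u assume "u \<in> \<Phi> ` T"
      then obtain t where t: "t \<in> T" "u = \<Phi> t" by auto
      show "u \<in> A // r \<rightarrow>\<^sub>E B"
      proof
        fix C assume "C \<in> A // r"
        then have "(SOME y. y \<in> C) \<in> A" using rep by auto
        then show "u C \<in> B" using t \<open>C \<in> A // r\<close> by (auto simp: \<Phi>_def T_def)
      next
        fix C assume "C \<notin> A // r" then show "u C = undefined" using t by (simp add: \<Phi>_def)
      qed
    qed
  qed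
  then have "card T = card (A // r \<rightarrow>\<^sub>E B)" by (simp add: bij_betw_same_card)
  also have "\<dots> = card B ^ card (A // r)" using fQ by (simp add: card_PiE)
  finally show ?thesis by (simp add: T_def r_def)
qed




lemma es_mem: "edge_structure N E \<Longrightarrow> (a,b) \<in> E \<Longrightarrow> a < N \<and> b < N \<and> a \<noteq> b"
  unfolding edge_structure_def by blast

lemma es_ex: "edge_structure N E \<Longrightarrow> h < N \<Longrightarrow> \<exists>e\<in>E. fst e = h \<or> snd e = h"
  unfolding edge_structure_def by blast

lemma es_uniq:
  assumes es: "edge_structure N E" and e1: "e1 \<in> E" and e2: "e2 \<in> E"
    and h1: "fst e1 = h \<or> snd e1 = h" and h2: "fst e2 = h \<or> snd e2 = h"
  shows "e1 = e2"
proof -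
  have "h < N" using es_mem[OF es, of "fst e1" "snd e1"] e1 h1 by auto
  then have "\<exists>!e. e \<in> E \<and> (fst e = h \<or> snd e = h)" using es unfolding edge_structure_def by blast
  then show ?thesis using e1 e2 h1 h2 by blast
qed

lemma es_finite: "edge_structure N E \<Longrightarrow> finite E"
proof -
  assume es: "edge_structure N E"
  have "E \<subseteq> {..<N} \<times> {..<N}" using es_mem[OF es] by auto
  then show "finite E" by (rule finite_subset) simp
qed

lemma es_swap_notin:
  assumes es: "edge_structure N E" and e: "e \<in> E"
  shows "prod.swap e \<notin> E"
proof (rule notI)
  assume s: "prod.swap e \<in> E"
  obtain a b where ab: "e = (a,b)" by (cases e)
  have ea: "(a,b) \<in> E" using e ab by simp
  have eb: "(b,a) \<in> E" using s ab by simp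
  have "(a,b) = (b,a)" by (rule es_uniq[OF es ea eb, of a]) simp_all
  moreover have "a \<noteq> b" using es_mem[OF es ea] by simp
  ultimately show False by simp
qed

lemma partner_eq:
  assumes es: "edge_structure N E" and b: "(h,b) \<in> E \<or> (b,h) \<in> E"
  shows "partner E h = b"
  unfolding partner_def
proof (rule the_equality)
  show "(h, b) \<in> E \<or> (b, h) \<in> E" by (rule b)
  fix b' assume b': "(h, b') \<in> E \<or> (b', h) \<in> E"
  show "b' = b"
  proof -
    have "\<And>e1 e2. e1 \<in> E \<Longrightarrow> e2 \<in> E \<Longrightarrow> (fst e1 = h \<or> snd e1 = h) \<Longrightarrow> (fst e2 = h \<or> snd e2 = h) \<Longrightarrow> e1 = e2"
      using es_uniq[OF es] by blast
    then show ?thesis using b b' es_mem[OF es] by (metis fst_conv snd_conv prod.inject)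
  qed
qed

lemma partner_in:
  assumes es: "edge_structure N E" and h: "h < N"
  shows "(h, partner E h) \<in> E \<or> (partner E h, h) \<in> E"
proof -
  obtain e where e: "e \<in> E" "fst e = h \<or> snd e = h" using es_ex[OF es h] by blast
  then obtain b where "(h,b) \<in> E \<or> (b,h) \<in> E" by (cases e) auto
  then show ?thesis using partner_eq[OF es] by metis
qed

lemma partner_props:
  assumes es: "edge_structure N E" and h: "h < N"
  shows "partner E h < N" "partner E h \<noteq> h" "partner E (partner E h) = h"
proof -
  have i: "(h, partner E h) \<in> E \<or> (partner E h, h) \<in> E" by (rule partner_in[OF es h])
  then show "partner E h < N" "partner E h \<noteq> h"
    using es_mem[OF es, of h "partner E h"] es_mem[OF es, of "partner E h" h] by auto
  show "partner E (partner E h) = h" using i partner_eq[OF es] by blast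
qed

lemma pairings_props:
  assumes "\<pi> \<in> pairings N" "h < N"
  shows "\<pi> h < N" "\<pi> h \<noteq> h" "\<pi> (\<pi> h) = h"
  using assms unfolding pairings_def by auto

lemma I_edge:
  assumes es: "edge_structure N E" and R: "R \<subseteq> E" and xy: "(x,y) \<in> E"
  shows "(x \<in> fst ` reverse_edges R E \<longleftrightarrow> (x,y) \<notin> R) \<and> (y \<in> fst ` reverse_edges R E \<longleftrightarrow> (x,y) \<in> R)"
proof -
  have fr: "fst ` reverse_edges R E = fst ` (E - R) \<union> snd ` R"
    unfolding reverse_edges_def by force
  have u: "e = (x,y)" if "e \<in> E" "fst e = z \<or> snd e = z" "z = x \<or> z = y" for e z
    by (rule es_uniq[OF es that(1) xy, of z]) (use that in auto)
  have xny: "x \<noteq> y" using es_mem[OF es xy] by blast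
  have "x \<in> fst ` (E - R) \<union> snd ` R \<longleftrightarrow> (x,y) \<notin> R"
  proof
    assume "x \<in> fst ` (E - R) \<union> snd ` R"
    then obtain e where "(e \<in> E - R \<and> fst e = x) \<or> (e \<in> R \<and> snd e = x)" by blast
    then show "(x,y) \<notin> R"
    proof
      assume h: "e \<in> E - R \<and> fst e = x"
      then have "e = (x,y)" using u[of e x] by auto
      then show ?thesis using h by auto
    next
      assume h: "e \<in> R \<and> snd e = x"
      then have "e \<in> E" using R by auto
      then have "e = (x,y)" using u[of e x] h by auto
      then show ?thesis using h xny by auto
    qed
  next
    assume "(x,y) \<notin> R" then show "x \<in> fst ` (E - R) \<union> snd ` R" using xy by force
  qed
  moreover have "y \<in> fst ` (E - R) \<union> snd ` R \<longleftrightarrow> (x,y) \<in> R"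
  proof
    assume "y \<in> fst ` (E - R) \<union> snd ` R"
    then obtain e where "(e \<in> E - R \<and> fst e = y) \<or> (e \<in> R \<and> snd e = y)" by blast
    then show "(x,y) \<in> R"
    proof
      assume h: "e \<in> E - R \<and> fst e = y"
      then have "e = (x,y)" using u[of e y] by auto
      then show ?thesis using h xny by auto
    next
      assume h: "e \<in> R \<and> snd e = y"
      then have "e \<in> E" using R by auto
      then have "e = (x,y)" using u[of e y] h by auto
      then show ?thesis using h by auto
    qed
  next
    assume "(x,y) \<in> R" then show "y \<in> fst ` (E - R) \<union> snd ` R" by force
  qed
  ultimately show ?thesis using fr by simp
qed

lemma I_partner:
  assumes es: "edge_structure N E" and R: "R \<subseteq> E" and h: "h < N"
  shows "partner E h \<in> fst ` reverse_edges R E \<longleftrightarrow> h \<notin> fst ` reverse_edges R E"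
  using partner_in[OF es h] I_edge[OF es R] by blast

lemma coh_exists:
  assumes es: "edge_structure N E" and pi: "\<pi> \<in> pairings N"
    and col: "\<forall>h\<in>{..<N}. (c::nat\<Rightarrow>bool) (partner E h) \<noteq> c h \<and> c (\<pi> h) \<noteq> c h"
  shows "\<exists>R. R \<subseteq> E \<and> coherent N (reverse_edges R E) \<pi>"
proof -
  define R where "R = {e \<in> E. \<not> c (fst e)}"
  have RE: "R \<subseteq> E" by (auto simp: R_def)
  have key: "h \<in> fst ` reverse_edges R E \<longleftrightarrow> c h" if h: "h < N" for h
  proof (cases "(h, partner E h) \<in> E")
    case True
    have "c (partner E h) \<noteq> c h" using col h by auto
    then show ?thesis using I_edge[OF es RE True] by (auto simp: R_def True)
  next
    case False
    then have F: "(partner E h, h) \<in> E" using partner_in[OF es h] by blast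
    have "c (partner E h) \<noteq> c h" using col h by auto
    then show ?thesis using I_edge[OF es RE F] by (auto simp: R_def F)
  qed
  have "coherent N (reverse_edges R E) \<pi>"
    unfolding coherent_def
  proof (intro allI impI)
    fix h assume h: "h < N"
    have "\<pi> h < N" using pairings_props[OF pi h] by blast
    then show "(h \<in> fst ` reverse_edges R E) = (\<pi> h \<notin> fst ` reverse_edges R E)"
      using key h col by auto
  qed
  then show ?thesis using RE by blast
qed




definition flip :: "nat \<times> bool \<Rightarrow> nat \<times> bool" where "flip x = (fst x, \<not> snd x)"
definition sg :: "nat \<times> bool \<Rightarrow> real" where "sg x = (if snd x then 1 else -1)"

lemma flip_flip[simp]: "flip (flip x) = x" by (simp add: flip_def)
lemma flip_eq_iff: "flip x = y \<longleftrightarrow> x = flip y" by (auto simp: flip_def)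
lemma sg_flip: "sg (flip x) = - sg x" by (simp add: sg_def flip_def)
lemma sg_sq: "sg x * sg x = 1" by (simp add: sg_def)
lemma omega_zero: "omega x y = 0 \<longleftrightarrow> y \<noteq> flip x"
  by (cases x; cases y) (auto simp: omega_def flip_def)
lemma omega_flip: "omega x (flip x) = sg x"
  by (cases x) (auto simp: omega_def flip_def sg_def)
lemma flip_sbasis: "x \<in> sbasis n \<Longrightarrow> flip x \<in> sbasis n"
  by (auto simp: sbasis_def flip_def)

lemma states_char:
  assumes es: "edge_structure (og_nhe X) (og_edges X)"
  shows "states n X = {s \<in> {..<og_nhe X} \<rightarrow>\<^sub>E sbasis n.
           \<forall>h<og_nhe X. s (partner (og_edges X) h) = flip (s h)}"
proof -
  define N where "N = og_nhe X"
  define E where "E = og_edges X"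
  have es': "edge_structure N E" using es by (simp add: N_def E_def)
  have eq: "(\<forall>(a, b)\<in>E. \<exists>i<n. (s a = (i, True) \<and> s b = (i, False)) \<or> (s a = (i, False) \<and> s b = (i, True)))
        \<longleftrightarrow> (\<forall>h<N. s (partner E h) = flip (s h))" if s: "s \<in> {..<N} \<rightarrow>\<^sub>E sbasis n" for s
  proof
    assume A: "\<forall>(a, b)\<in>E. \<exists>i<n. (s a = (i, True) \<and> s b = (i, False)) \<or> (s a = (i, False) \<and> s b = (i, True))"
    have A': "s b = flip (s a) \<and> s a = flip (s b)" if "(a,b) \<in> E" for a b
    proof -
      from A that obtain i where "(s a = (i,True) \<and> s b = (i,False)) \<or> (s a = (i,False) \<and> s b = (i,True))" by blast
      then show ?thesis by (auto simp: flip_def)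
    qed
    show "\<forall>h<N. s (partner E h) = flip (s h)"
    proof (intro allI impI)
      fix h assume "h < N"
      from partner_in[OF es' this] show "s (partner E h) = flip (s h)" using A' by blast
    qed
  next
    assume B: "\<forall>h<N. s (partner E h) = flip (s h)"
    show "\<forall>(a, b)\<in>E. \<exists>i<n. (s a = (i, True) \<and> s b = (i, False)) \<or> (s a = (i, False) \<and> s b = (i, True))"
    proof (clarify)
      fix a b assume ab: "(a,b) \<in> E"
      have aN: "a < N" using es_mem[OF es' ab] by blast
      have "partner E a = b" using partner_eq[OF es'] ab by blast
      then have sb: "s b = flip (s a)" using B aN by metis
      have "s a \<in> sbasis n" using s aN by auto
      then obtain i t where it: "s a = (i,t)" "i < n" by (auto simp: sbasis_def)
      then show "\<exists>i<n. (s a = (i, True) \<and> s b = (i, False)) \<or> (s a = (i, False) \<and> s b = (i, True))"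
        using sb by (cases t) (auto simp: flip_def)
    qed
  qed
  have "states n X = {s \<in> {..<N} \<rightarrow>\<^sub>E sbasis n. \<forall>(a, b)\<in>E. \<exists>i<n. (s a = (i, True) \<and> s b = (i, False)) \<or> (s a = (i, False) \<and> s b = (i, True))}"
    by (simp add: states_def N_def E_def)
  also have "\<dots> = {s \<in> {..<N} \<rightarrow>\<^sub>E sbasis n. \<forall>h<N. s (partner E h) = flip (s h)}"
    by (rule Collect_cong, rule conj_cong[OF refl], erule eq)
  finally show ?thesis by (simp add: N_def E_def)
qed


lemma theta_point:
  assumes qI: "q h \<in> I \<longleftrightarrow> h \<notin> I"
  shows "s (q h) = flip (s h) \<longleftrightarrow>
    (if q h \<in> I then s (q h) else flip (s (q h))) = (if h \<in> I then s h else flip (s h))"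
proof (cases "h \<in> I")
  case True
  then have "q h \<notin> I" using qI by blast
  then show ?thesis using True flip_eq_iff by auto
next
  case False
  then have "q h \<in> I" using qI by blast
  then show ?thesis using False by auto
qed

lemma card_G:
  fixes p q :: "nat \<Rightarrow> nat" and I :: "nat set"
  assumes pN: "\<And>h. h < N \<Longrightarrow> p h < N \<and> p (p h) = h" and qN: "\<And>h. h < N \<Longrightarrow> q h < N \<and> q (q h) = h"
    and pI: "\<And>h. h < N \<Longrightarrow> p h \<in> I \<longleftrightarrow> h \<notin> I" and qI: "\<And>h. h < N \<Longrightarrow> q h \<in> I \<longleftrightarrow> h \<notin> I"
  shows "card {s \<in> {..<N} \<rightarrow>\<^sub>E sbasis n. \<forall>h<N. s (p h) = flip (s h) \<and> s (q h) = flip (s h)}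
    = (2 * n) ^ card ({..<N} // ({(h, p h) | h. h < N} \<union> {(h, q h) | h. h < N})\<^sup>*)"
proof -
  define A where "A = {..<N}"
  define B where "B = sbasis n"
  define G where "G = {s \<in> A \<rightarrow>\<^sub>E B. \<forall>h<N. s (p h) = flip (s h) \<and> s (q h) = flip (s h)}"
  define rel where "rel = {(h, p h) | h. h < N} \<union> {(h, q h) | h. h < N}"
  define T where "T = {t \<in> A \<rightarrow>\<^sub>E B. \<forall>(x,y)\<in>rel. t x = t y}"
  define T' where "T' = {t \<in> A \<rightarrow>\<^sub>E B. \<forall>h<N. t (p h) = t h \<and> t (q h) = t h}"
  have TT': "T = T'"
  proof -
    have "(\<forall>(x,y)\<in>rel. t x = t y) \<longleftrightarrow> (\<forall>h<N. t (p h) = t h \<and> t (q h) = t h)" for t :: "nat \<Rightarrow> nat \<times> bool"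
    proof
      assume H: "\<forall>(x,y)\<in>rel. t x = t y"
      show "\<forall>h<N. t (p h) = t h \<and> t (q h) = t h"
      proof (intro allI impI)
        fix h assume h: "h < N"
        have r: "(h, p h) \<in> rel" "(h, q h) \<in> rel" unfolding rel_def using h by auto
        have "t h = t (p h)" using H r(1) by auto
        moreover have "t h = t (q h)" using H r(2) by auto
        ultimately show "t (p h) = t h \<and> t (q h) = t h" by simp
      qed
    next
      assume "\<forall>h<N. t (p h) = t h \<and> t (q h) = t h"
      then show "\<forall>(x,y)\<in>rel. t x = t y" unfolding rel_def by auto
    qed
    then show ?thesis unfolding T_def T'_def by blast
  qed
  define \<Theta> where "\<Theta> s = restrict (\<lambda>h. if h \<in> I then s h else flip (s h)) A" for s :: "nat \<Rightarrow> nat \<times> bool"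
  have \<Theta>Pi: "\<Theta> s \<in> A \<rightarrow>\<^sub>E B" if "s \<in> A \<rightarrow>\<^sub>E B" for s
  proof
    fix h assume "h \<in> A"
    then have "s h \<in> B" using that by blast
    then show "\<Theta> s h \<in> B" using \<open>h \<in> A\<close> flip_sbasis by (auto simp: \<Theta>_def B_def)
  next
    fix h assume "h \<notin> A" then show "\<Theta> s h = undefined" by (simp add: \<Theta>_def)
  qed
  have \<Theta>\<Theta>: "\<Theta> (\<Theta> s) = s" if "s \<in> A \<rightarrow>\<^sub>E B" for s
  proof
    fix h show "\<Theta> (\<Theta> s) h = s h"
      using that by (cases "h \<in> A") (auto simp: \<Theta>_def PiE_def extensional_def)
  qed
  have \<Theta>A: "\<Theta> s h = (if h \<in> I then s h else flip (s h))" if "h < N" for s h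
    using that by (simp add: \<Theta>_def A_def)
  have key: "(\<forall>h<N. s (p h) = flip (s h) \<and> s (q h) = flip (s h)) \<longleftrightarrow>
             (\<forall>h<N. \<Theta> s (p h) = \<Theta> s h \<and> \<Theta> s (q h) = \<Theta> s h)" for s
  proof -
    have "(s (p h) = flip (s h) \<and> s (q h) = flip (s h)) \<longleftrightarrow> (\<Theta> s (p h) = \<Theta> s h \<and> \<Theta> s (q h) = \<Theta> s h)"
      if h: "h < N" for h
    proof -
      have e1: "s (p h) = flip (s h) \<longleftrightarrow> \<Theta> s (p h) = \<Theta> s h"
        using theta_point[of p h I s, OF pI[OF h]] \<Theta>A[OF h] \<Theta>A[of "p h"] pN[OF h] by simp
      have e2: "s (q h) = flip (s h) \<longleftrightarrow> \<Theta> s (q h) = \<Theta> s h"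
        using theta_point[of q h I s, OF qI[OF h]] \<Theta>A[OF h] \<Theta>A[of "q h"] qN[OF h] by simp
      show ?thesis using e1 e2 by blast
    qed
    then show ?thesis by blast
  qed
  have "bij_betw \<Theta> G T'"
  proof (rule bij_betw_byWitness[where f' = \<Theta>])
    show "\<forall>a\<in>G. \<Theta> (\<Theta> a) = a" using \<Theta>\<Theta> by (simp add: G_def)
    show "\<forall>a\<in>T'. \<Theta> (\<Theta> a) = a" using \<Theta>\<Theta> by (simp add: T'_def)
    show "\<Theta> ` G \<subseteq> T'"
    proof
      fix t assume "t \<in> \<Theta> ` G"
      then obtain s where s: "s \<in> G" "t = \<Theta> s" by blast
      then show "t \<in> T'" using key[of s] \<Theta>Pi by (simp add: G_def T'_def)
    qed
    show "\<Theta> ` T' \<subseteq> G"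
    proof
      fix s assume "s \<in> \<Theta> ` T'"
      then obtain t where t: "t \<in> T'" "s = \<Theta> t" by blast
      then have "\<Theta> s = t" using \<Theta>\<Theta> by (simp add: T'_def)
      then show "s \<in> G" using key[of s] \<Theta>Pi t by (simp add: G_def T'_def)
    qed
  qed
  then have "card G = card T'" by (rule bij_betw_same_card)
  also have "\<dots> = card T" using TT' by simp
  also have "\<dots> = card B ^ card (A // rel\<^sup>*)"
    unfolding T_def
  proof (rule count_classes)
    show "finite A" by (simp add: A_def)
    show "rel \<subseteq> A \<times> A" using pN qN by (auto simp: rel_def A_def)
    show "sym rel" unfolding sym_def rel_def using pN qN by force
  qed
  also have "card B = 2 * n" by (simp add: B_def sbasis_def card_cartesian_product)
  finally show ?thesis by (simp add: G_def A_def B_def rel_def)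
qed




lemma sum_D:
  assumes es: "edge_structure (og_nhe X) (og_edges X)"
    and pi: "\<pi> \<in> pairings (og_nhe X)"
    and R: "R \<subseteq> og_edges X"
    and coh: "coherent (og_nhe X) (reverse_edges R (og_edges X)) \<pi>"
  shows "(\<Sum>s\<in>states n X. state_sign X s *
            (\<Prod>(a,b)\<in>induced_edges (og_nhe X) (reverse_edges R (og_edges X)) \<pi>. omega (s a) (s b)))
         = (-1) ^ card R * (2 * real n) ^ num_circles (og_nhe X) (og_edges X) \<pi>"
proof -
  define N where "N = og_nhe X"
  define E where "E = og_edges X"
  define p where "p = partner E"
  define I where "I = fst ` reverse_edges R E"
  have esN: "edge_structure N E" using es by (simp add: N_def E_def)
  have RE: "R \<subseteq> E" using R by (simp add: E_def)
  have finE: "finite E" by (rule es_finite[OF esN])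
  have finR: "finite R" using finE RE by (rule finite_subset[rotated])
  have I_alt: "I = fst ` (E - R) \<union> snd ` R" unfolding I_def reverse_edges_def by force
  have IN: "I \<subseteq> {..<N}"
  proof
    fix x assume "x \<in> I"
    then obtain e where "(e \<in> E \<and> fst e = x) \<or> (e \<in> E \<and> snd e = x)" using I_alt RE by blast
    then show "x \<in> {..<N}" using es_mem[OF esN, of "fst e" "snd e"] by auto
  qed
  have finI: "finite I" using IN finite_subset by blast
  have pN: "p h < N \<and> p (p h) = h" if "h < N" for h
    using partner_props[OF esN that] by (simp add: p_def)
  have qN: "\<pi> h < N \<and> \<pi> (\<pi> h) = h" if "h < N" for h
    using pairings_props[OF pi[folded N_def] that] by simp
  have pI: "p h \<in> I \<longleftrightarrow> h \<notin> I" if "h < N" for h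
    using I_partner[OF esN RE that] by (simp add: p_def I_def)
  have qI: "\<pi> h \<in> I \<longleftrightarrow> h \<notin> I" if "h < N" for h
    using coh that unfolding coherent_def N_def[symmetric] E_def[symmetric] I_def[symmetric] by blast
  have Deq: "induced_edges N (reverse_edges R E) \<pi> = (\<lambda>a. (a, \<pi> a)) ` I"
    using IN unfolding induced_edges_def I_def by auto
  have injD: "inj_on (\<lambda>a. (a, \<pi> a)) I" by (rule inj_onI) simp
  have prodD: "(\<Prod>(a,b)\<in>induced_edges N (reverse_edges R E) \<pi>. omega (s a) (s b))
        = (\<Prod>a\<in>I. omega (s a) (s (\<pi> a)))" for s :: "nat \<Rightarrow> nat \<times> bool"
    unfolding Deq by (simp add: prod.reindex[OF injD])
  define G where "G = {s \<in> {..<N} \<rightarrow>\<^sub>E sbasis n. \<forall>h<N. s (p h) = flip (s h) \<and> s (\<pi> h) = flip (s h)}"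
  have st: "states n X = {s \<in> {..<N} \<rightarrow>\<^sub>E sbasis n. \<forall>h<N. s (p h) = flip (s h)}"
    using states_char[OF es, of n] by (simp add: N_def p_def E_def)
  have GS: "G \<subseteq> states n X" unfolding st G_def by auto
  have finS: "finite (states n X)" unfolding st
    by (rule finite_subset[of _ "{..<N} \<rightarrow>\<^sub>E sbasis n"]) (auto simp: sbasis_def intro!: finite_PiE)
  have sgn: "state_sign X s = (\<Prod>e\<in>E. sg (s (fst e)))" for s
    unfolding state_sign_def E_def[symmetric] by (rule prod.cong) (auto simp: sg_def)
  have zero: "(\<Prod>a\<in>I. omega (s a) (s (\<pi> a))) = 0" if s: "s \<in> states n X - G" for s
  proof -
    from s obtain h where h: "h < N" "s (\<pi> h) \<noteq> flip (s h)" unfolding st G_def by auto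
    show ?thesis
    proof (rule prod_zero[OF finI])
      show "\<exists>a\<in>I. omega (s a) (s (\<pi> a)) = 0"
      proof (cases "h \<in> I")
        case True then show ?thesis using h omega_zero by blast
      next
        case False
        then have "\<pi> h \<in> I" using qI h by blast
        moreover have "s (\<pi> (\<pi> h)) \<noteq> flip (s (\<pi> h))" using h qN[OF h(1)] flip_eq_iff by metis
        ultimately show ?thesis using omega_zero by blast
      qed
    qed
  qed
  have one: "state_sign X s * (\<Prod>a\<in>I. omega (s a) (s (\<pi> a))) = (-1) ^ card R" if s: "s \<in> G" for s
  proof -
    have sflip: "s (\<pi> h) = flip (s h)" "s (p h) = flip (s h)" if "h < N" for h
      using s that unfolding G_def by auto
    have edge_flip: "s (snd e) = flip (s (fst e))" if "e \<in> E" for e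
    proof -
      obtain a b where ab: "e = (a,b)" by (cases e)
      have "a < N" using es_mem[OF esN] that ab by blast
      moreover have "p a = b" unfolding p_def using partner_eq[OF esN] that ab by blast
      ultimately show ?thesis using sflip ab by auto
    qed
    have P1: "(\<Prod>a\<in>I. omega (s a) (s (\<pi> a))) = (\<Prod>a\<in>I. sg (s a))"
    proof (rule prod.cong[OF refl])
      fix a assume "a \<in> I"
      then have "a < N" using IN by auto
      then show "omega (s a) (s (\<pi> a)) = sg (s a)" using sflip omega_flip by simp
    qed
    have disj: "fst ` (E - R) \<inter> snd ` R = {}"
    proof (rule ccontr)
      assume "fst ` (E - R) \<inter> snd ` R \<noteq> {}"
      then obtain e1 e2 where e: "e1 \<in> E - R" "e2 \<in> R" "fst e1 = snd e2" by force
      have "e1 = e2" by (rule es_uniq[OF esN, of e1 e2 "fst e1"]) (use e RE in auto)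
      then show False using e by blast
    qed
    have injf: "inj_on fst (E - R)"
    proof (rule inj_onI)
      fix e1 e2 assume "e1 \<in> E - R" "e2 \<in> E - R" "fst e1 = fst e2"
      then show "e1 = e2" by (intro es_uniq[OF esN, of e1 e2 "fst e1"]) auto
    qed
    have injs: "inj_on snd R"
    proof (rule inj_onI)
      fix e1 e2 assume "e1 \<in> R" "e2 \<in> R" "snd e1 = snd e2"
      then show "e1 = e2" using RE by (intro es_uniq[OF esN, of e1 e2 "snd e1"]) auto
    qed
    have "(\<Prod>a\<in>I. sg (s a)) = (\<Prod>a\<in>fst ` (E - R). sg (s a)) * (\<Prod>a\<in>snd ` R. sg (s a))"
      unfolding I_alt by (rule prod.union_disjoint) (use finE finR disj in auto)
    also have "(\<Prod>a\<in>fst ` (E - R). sg (s a)) = (\<Prod>e\<in>E - R. sg (s (fst e)))"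
      by (simp add: prod.reindex[OF injf])
    also have "(\<Prod>a\<in>snd ` R. sg (s a)) = (\<Prod>e\<in>R. sg (s (snd e)))"
      by (simp add: prod.reindex[OF injs])
    also have "\<dots> = (\<Prod>e\<in>R. - sg (s (fst e)))"
    proof (rule prod.cong[OF refl])
      fix e assume "e \<in> R"
      then have "e \<in> E" using RE by auto
      then show "sg (s (snd e)) = - sg (s (fst e))" using edge_flip sg_flip by simp
    qed
    also have "\<dots> = (-1) ^ card R * (\<Prod>e\<in>R. sg (s (fst e)))" by (rule prod_uminus)
    finally have "(\<Prod>a\<in>I. sg (s a)) = (-1) ^ card R * ((\<Prod>e\<in>E - R. sg (s (fst e))) * (\<Prod>e\<in>R. sg (s (fst e))))"
      by (simp add: algebra_simps)
    also have "(\<Prod>e\<in>E - R. sg (s (fst e))) * (\<Prod>e\<in>R. sg (s (fst e))) = (\<Prod>e\<in>E. sg (s (fst e)))"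
      by (rule prod.subset_diff[OF RE finE, symmetric])
    finally have P2: "(\<Prod>a\<in>I. sg (s a)) = (-1) ^ card R * (\<Prod>e\<in>E. sg (s (fst e)))" .
    have sq: "(\<Prod>e\<in>E. sg (s (fst e))) * (\<Prod>e\<in>E. sg (s (fst e))) = 1"
      by (simp add: prod.distrib[symmetric] sg_sq)
    show ?thesis unfolding P1 P2 sgn
      by (metis (no_types, lifting) mult.commute mult.left_commute mult_1_right sq)
  qed
  have "(\<Sum>s\<in>states n X. state_sign X s * (\<Prod>a\<in>I. omega (s a) (s (\<pi> a))))
      = (\<Sum>s\<in>G. state_sign X s * (\<Prod>a\<in>I. omega (s a) (s (\<pi> a))))"
    by (rule sum.mono_neutral_right[OF finS GS]) (simp add: zero)
  also have "\<dots> = (\<Sum>s\<in>G. (-1) ^ card R)" by (rule sum.cong[OF refl]) (simp add: one)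
  also have "\<dots> = real (card G) * (-1) ^ card R" by simp
  also have "card G = (2 * n) ^ num_circles N E \<pi>"
    unfolding G_def num_circles_def p_def by (rule card_G[OF pN qN pI qI, unfolded p_def])
  finally show ?thesis unfolding prodD[symmetric] N_def E_def by simp
qed




lemma es_iff:
  "edge_structure N E \<longleftrightarrow>
     (\<forall>(a, b)\<in>E. a < N \<and> b < N \<and> a \<noteq> b)
     \<and> (\<forall>h<N. \<exists>e\<in>E. fst e = h \<or> snd e = h)
     \<and> (\<forall>e1 e2 h. e1 \<in> E \<longrightarrow> e2 \<in> E \<longrightarrow> (fst e1 = h \<or> snd e1 = h) \<longrightarrow> (fst e2 = h \<or> snd e2 = h) \<longrightarrow> e1 = e2)"
  (is "?L \<longleftrightarrow> ?A \<and> ?B \<and> ?C")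
proof
  assume L: ?L
  show "?A \<and> ?B \<and> ?C"
  proof (intro conjI)
    show ?A using es_mem[OF L] by blast
    show ?B using es_ex[OF L] by blast
    show ?C using es_uniq[OF L] by blast
  qed
next
  assume H: "?A \<and> ?B \<and> ?C"
  show ?L unfolding edge_structure_def
  proof (intro conjI allI impI)
    show ?A using H by blast
    fix h assume h: "h < N"
    from H h obtain e where e: "e \<in> E" "fst e = h \<or> snd e = h" by blast
    show "\<exists>!e. e \<in> E \<and> (fst e = h \<or> snd e = h)"
    proof (rule ex1I[of _ e])
      show "e \<in> E \<and> (fst e = h \<or> snd e = h)" using e by blast
      fix e' assume "e' \<in> E \<and> (fst e' = h \<or> snd e' = h)"
      then show "e' = e" using H e by blast
    qed
  qed
qed

lemma valid_edges:
  assumes "valid_ograph Op X"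
  shows "valid_ograph Op (X\<lparr>og_edges := E\<rparr>) \<longleftrightarrow> edge_structure (og_nhe X) E"
  using assms by (simp add: valid_ograph_def og_deg_def)

lemma es_rev1:
  assumes es: "edge_structure N D" and e: "e \<in> D"
  shows "edge_structure N ((D - {e}) \<union> {prod.swap e})"
proof -
  obtain a b where ab: "e = (a,b)" by (cases e)
  have eD: "(a,b) \<in> D" using e ab by simp
  have abN: "a < N" "b < N" "a \<noteq> b" using es_mem[OF es eD] by auto
  have nsw: "(b,a) \<notin> D" using es_swap_notin[OF es eD] by simp
  define D' where "D' = (D - {(a,b)}) \<union> {(b,a)}"
  have A: "\<forall>(x, y)\<in>D'. x < N \<and> y < N \<and> x \<noteq> y"
    using es_mem[OF es] abN unfolding D'_def by auto
  have B: "\<forall>h<N. \<exists>e'\<in>D'. fst e' = h \<or> snd e' = h"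
  proof (intro allI impI)
    fix h assume h: "h < N"
    obtain e0 where e0: "e0 \<in> D" "fst e0 = h \<or> snd e0 = h" using es_ex[OF es h] by blast
    show "\<exists>e'\<in>D'. fst e' = h \<or> snd e' = h"
    proof (cases "e0 = (a,b)")
      case True
      then show ?thesis using e0 unfolding D'_def by (intro bexI[of _ "(b,a)"]) auto
    next
      case False
      then show ?thesis using e0 unfolding D'_def by (intro bexI[of _ e0]) auto
    qed
  qed
  have C: "\<forall>e1 e2 h. e1 \<in> D' \<longrightarrow> e2 \<in> D' \<longrightarrow> (fst e1 = h \<or> snd e1 = h) \<longrightarrow> (fst e2 = h \<or> snd e2 = h) \<longrightarrow> e1 = e2"
  proof (intro allI impI)
    fix e1 e2 h assume e1: "e1 \<in> D'" and e2: "e2 \<in> D'" and h1: "fst e1 = h \<or> snd e1 = h" and h2: "fst e2 = h \<or> snd e2 = h"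
    define g where "g x = (if x = (b,a) then (a,b) else x)" for x :: "nat \<times> nat"
    have g1: "g e1 \<in> D" "fst (g e1) = h \<or> snd (g e1) = h" using e1 h1 eD unfolding D'_def g_def by auto
    have g2: "g e2 \<in> D" "fst (g e2) = h \<or> snd (g e2) = h" using e2 h2 eD unfolding D'_def g_def by auto
    have "g e1 = g e2" by (rule es_uniq[OF es g1(1) g2(1) g1(2) g2(2)])
    moreover have "e1 \<noteq> (a,b)" "e2 \<noteq> (a,b)" using e1 e2 abN unfolding D'_def by auto
    ultimately show "e1 = e2" unfolding g_def by (auto split: if_splits)
  qed
  have "(D - {e}) \<union> {prod.swap e} = D'" using ab by (simp add: D'_def)
  moreover have "edge_structure N D'" unfolding es_iff using A B C by (intro conjI)
  ultimately show ?thesis by simp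
qed

lemma omega_antisym: "omega y x = - omega x y"
  by (auto simp: omega_def)

definition Pw :: "(nat \<Rightarrow> nat \<times> bool) \<Rightarrow> (nat \<times> nat) set \<Rightarrow> real" where
  "Pw s D = (\<Prod>(a,b)\<in>D. omega (s a) (s b))"

lemma Pw_rev1:
  assumes es: "edge_structure N D" and e: "e \<in> D"
  shows "Pw s ((D - {e}) \<union> {prod.swap e}) = - Pw s D"
proof -
  obtain a b where ab: "e = (a,b)" by (cases e)
  have eD: "(a,b) \<in> D" using e ab by simp
  have nsw: "(b,a) \<notin> D" using es_swap_notin[OF es eD] by simp
  have fin: "finite D" by (rule es_finite[OF es])
  have fin0: "finite (D - {(a,b)})" using fin by simp
  have nin: "(b,a) \<notin> D - {(a,b)}" using nsw by simp
  have ins: "(D - {(a,b)}) \<union> {(b,a)} = insert (b,a) (D - {(a,b)})" by blast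
  have "Pw s ((D - {(a,b)}) \<union> {(b,a)}) = omega (s b) (s a) * Pw s (D - {(a,b)})"
    unfolding Pw_def ins prod.insert[OF fin0 nin] by simp
  also have "Pw s D = omega (s a) (s b) * Pw s (D - {(a,b)})"
    unfolding Pw_def prod.remove[OF fin eD] by simp
  ultimately show ?thesis using ab omega_antisym[of "s a" "s b"] by simp
qed

lemma rev_many:
  assumes val: "valid_ograph Op X" and resp: "respects_OG Op act F"
  shows "finite Q \<Longrightarrow> Q \<subseteq> D \<Longrightarrow> edge_structure (og_nhe X) D \<Longrightarrow>
    edge_structure (og_nhe X) (reverse_edges Q D) \<and>
    (\<forall>s. Pw s (reverse_edges Q D) *\<^sub>R F (X\<lparr>og_edges := reverse_edges Q D\<rparr>) = Pw s D *\<^sub>R F (X\<lparr>og_edges := D\<rparr>))"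
proof (induction Q rule: finite_induct)
  case empty
  then show ?case by (simp add: reverse_edges_def)
next
  case (insert e Q)
  define D0 where "D0 = reverse_edges Q D"
  have IH: "edge_structure (og_nhe X) D0"
    "\<And>s. Pw s D0 *\<^sub>R F (X\<lparr>og_edges := D0\<rparr>) = Pw s D *\<^sub>R F (X\<lparr>og_edges := D\<rparr>)"
    using insert unfolding D0_def by auto
  have eD: "e \<in> D" using insert by auto
  have nsw: "prod.swap e \<notin> D" using es_swap_notin[OF insert(5) eD] .
  have eswQ: "e \<notin> prod.swap ` Q"
  proof
    assume "e \<in> prod.swap ` Q"
    then obtain q where "q \<in> Q" "e = prod.swap q" by blast
    then have "prod.swap e \<in> D" using insert by auto
    then show False using nsw by blast
  qed
  have e0: "e \<in> D0" using eD insert(2) unfolding D0_def reverse_edges_def by auto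
  have req: "reverse_edges (insert e Q) D = (D0 - {e}) \<union> {prod.swap e}"
    using eswQ insert(2) unfolding D0_def reverse_edges_def by auto
  have es1: "edge_structure (og_nhe X) (reverse_edges (insert e Q) D)"
    unfolding req by (rule es_rev1[OF IH(1) e0])
  have v0: "valid_ograph Op (X\<lparr>og_edges := D0\<rparr>)" using valid_edges[OF val] IH(1) by simp
  have Fr: "F (reverse_edge e (X\<lparr>og_edges := D0\<rparr>)) = - F (X\<lparr>og_edges := D0\<rparr>)"
  proof -
    have rev: "\<forall>G e. valid_ograph Op G \<and> e \<in> og_edges G \<longrightarrow> F (reverse_edge e G) = - F G"
      using resp unfolding respects_OG_def by blast
    show ?thesis using rev[rule_format, of "X\<lparr>og_edges := D0\<rparr>" e] v0 e0 by simp
  qed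
  have rr: "reverse_edge e (X\<lparr>og_edges := D0\<rparr>) = X\<lparr>og_edges := reverse_edges (insert e Q) D\<rparr>"
    unfolding req reverse_edge_def by simp
  have "Pw s (reverse_edges (insert e Q) D) *\<^sub>R F (X\<lparr>og_edges := reverse_edges (insert e Q) D\<rparr>)
        = Pw s D *\<^sub>R F (X\<lparr>og_edges := D\<rparr>)" for s
  proof -
    have "Pw s (reverse_edges (insert e Q) D) = - Pw s D0" unfolding req by (rule Pw_rev1[OF IH(1) e0])
    then have "Pw s (reverse_edges (insert e Q) D) *\<^sub>R F (X\<lparr>og_edges := reverse_edges (insert e Q) D\<rparr>)
        = Pw s D0 *\<^sub>R F (X\<lparr>og_edges := D0\<rparr>)" using Fr rr by simp
    then show ?thesis using IH(2) by simp
  qed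
  then show ?case using es1 by blast
qed




lemma per_pi:
  assumes val: "valid_ograph Op X" and resp: "respects_OG Op act F"
    and pi: "\<pi> \<in> pairings (og_nhe X)"
  shows "(\<Sum>s\<in>states n X. state_sign X s *\<^sub>R
           ((\<Prod>(a, b)\<in>pairing_edges_min (og_nhe X) \<pi>. omega (s a) (s b))
             *\<^sub>R F (X\<lparr>og_edges := pairing_edges_min (og_nhe X) \<pi>\<rparr>)))
       = (let R = coherent_reversal X \<pi> in
        ((2 * real n) ^ num_circles (og_nhe X) (og_edges X) \<pi> * (-1) ^ card R)
          *\<^sub>R F (X\<lparr>og_edges := induced_edges (og_nhe X) (reverse_edges R (og_edges X)) \<pi>\<rparr>))"
proof -
  define N where "N = og_nhe X"
  define E where "E = og_edges X"
  have esX: "edge_structure N E" using val by (simp add: valid_ograph_def N_def E_def)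
  have piN: "\<pi> \<in> pairings N" using pi by (simp add: N_def)
  have qN: "\<pi> h < N \<and> \<pi> h \<noteq> h \<and> \<pi> (\<pi> h) = h" if "h < N" for h
    using pairings_props[OF piN that] by simp
  obtain c :: "nat \<Rightarrow> bool" where col: "\<forall>h\<in>{..<N}. c (partner E h) \<noteq> c h \<and> c (\<pi> h) \<noteq> c h"
  proof -
    have "\<exists>c::nat\<Rightarrow>bool. \<forall>h\<in>{..<N}. c (partner E h) \<noteq> c h \<and> c (\<pi> h) \<noteq> c h"
    proof (rule two_col_aux[of "{..<N}" N])
      show "\<forall>h\<in>{..<N}. partner E h \<in> {..<N} \<and> partner E h \<noteq> h \<and> partner E (partner E h) = h"
        using partner_props[OF esX] by auto
      show "\<forall>h\<in>{..<N}. \<pi> h \<in> {..<N} \<and> \<pi> h \<noteq> h \<and> \<pi> (\<pi> h) = h"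
        using qN by auto
    qed auto
    then show ?thesis using that by blast
  qed
  have exR: "\<exists>R. R \<subseteq> E \<and> coherent N (reverse_edges R E) \<pi>"
    by (rule coh_exists[OF esX piN col])
  define R where "R = coherent_reversal X \<pi>"
  have RP: "R \<subseteq> E \<and> coherent N (reverse_edges R E) \<pi>"
    unfolding R_def coherent_reversal_def N_def[symmetric] E_def[symmetric] using exR by (rule someI_ex)
  then have RE: "R \<subseteq> E" and coh: "coherent N (reverse_edges R E) \<pi>" by auto
  define I where "I = fst ` reverse_edges R E"
  define D where "D = induced_edges N (reverse_edges R E) \<pi>"
  have I_alt: "I = fst ` (E - R) \<union> snd ` R" unfolding I_def reverse_edges_def by force
  have IN: "I \<subseteq> {..<N}"
  proof
    fix x assume "x \<in> I"
    then obtain e where "(e \<in> E \<and> fst e = x) \<or> (e \<in> E \<and> snd e = x)" using I_alt RE by blast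
    then show "x \<in> {..<N}" using es_mem[OF esX, of "fst e" "snd e"] by auto
  qed
  have qI: "\<pi> h \<in> I \<longleftrightarrow> h \<notin> I" if "h < N" for h
    using coh that unfolding coherent_def I_def[symmetric] by blast
  have Deq: "D = (\<lambda>a. (a, \<pi> a)) ` I"
    using IN unfolding D_def induced_edges_def I_def by auto
  have finD: "finite D" unfolding Deq using IN finite_subset by blast
  have esD: "edge_structure N D"
    unfolding es_iff
  proof (intro conjI)
    show "\<forall>(x, y)\<in>D. x < N \<and> y < N \<and> x \<noteq> y"
    proof
      fix e assume "e \<in> D"
      then obtain a where a: "a \<in> I" "e = (a, \<pi> a)" unfolding Deq by blast
      then have "a < N" using IN by auto
      then show "case e of (x, y) \<Rightarrow> x < N \<and> y < N \<and> x \<noteq> y" using qN[of a] a by auto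
    qed
    show "\<forall>h<N. \<exists>e\<in>D. fst e = h \<or> snd e = h"
    proof (intro allI impI)
      fix h assume h: "h < N"
      show "\<exists>e\<in>D. fst e = h \<or> snd e = h"
      proof (cases "h \<in> I")
        case True then show ?thesis unfolding Deq by force
      next
        case False
        then have "\<pi> h \<in> I" using qI h by blast
        then have "(\<pi> h, \<pi> (\<pi> h)) \<in> D" unfolding Deq by blast
        then show ?thesis using qN[OF h] by (intro bexI[of _ "(\<pi> h, \<pi> (\<pi> h))"]) auto
      qed
    qed
    show "\<forall>e1 e2 h. e1 \<in> D \<longrightarrow> e2 \<in> D \<longrightarrow> (fst e1 = h \<or> snd e1 = h) \<longrightarrow> (fst e2 = h \<or> snd e2 = h) \<longrightarrow> e1 = e2"
    proof (intro allI impI)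
      fix e1 e2 h assume e1: "e1 \<in> D" and e2: "e2 \<in> D" and h1: "fst e1 = h \<or> snd e1 = h" and h2: "fst e2 = h \<or> snd e2 = h"
      obtain a1 where a1: "a1 \<in> I" "e1 = (a1, \<pi> a1)" using e1 unfolding Deq by blast
      obtain a2 where a2: "a2 \<in> I" "e2 = (a2, \<pi> a2)" using e2 unfolding Deq by blast
      have n1: "a1 < N" and n2: "a2 < N" using a1 a2 IN by auto
      have "a1 = a2"
      proof -
        have c1: "a1 = h \<or> \<pi> a1 = h" using h1 a1 by auto
        have c2: "a2 = h \<or> \<pi> a2 = h" using h2 a2 by auto
        show ?thesis
        proof (cases "a1 = h")
          case T1: True
          show ?thesis
          proof (cases "a2 = h")
            case True then show ?thesis using T1 by simp
          next
            case False
            then have "\<pi> a2 = h" using c2 by blast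
            then have "a2 = \<pi> a1" using qN[OF n2] T1 by metis
            then show ?thesis using qI[OF n1] a1 a2 by blast
          qed
        next
          case F1: False
          then have pa1: "\<pi> a1 = h" using c1 by blast
          show ?thesis
          proof (cases "a2 = h")
            case True
            then have "a1 = \<pi> a2" using qN[OF n1] pa1 by metis
            then show ?thesis using qI[OF n2] a1 a2 by blast
          next
            case False
            then have "\<pi> a2 = h" using c2 by blast
            then show ?thesis using pa1 qN[OF n1] qN[OF n2] by metis
          qed
        qed
      qed
      then show "e1 = e2" using a1 a2 by simp
    qed
  qed
  define Q where "Q = {e \<in> D. snd e < fst e}"
  have QD: "Q \<subseteq> D" and finQ: "finite Q" using finD by (auto simp: Q_def)
  have mineq: "pairing_edges_min N \<pi> = reverse_edges Q D"
  proof
    show "pairing_edges_min N \<pi> \<subseteq> reverse_edges Q D"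
    proof
      fix x assume "x \<in> pairing_edges_min N \<pi>"
      then obtain a where a: "x = (a, \<pi> a)" "a < N" "a < \<pi> a" unfolding pairing_edges_min_def by blast
      show "x \<in> reverse_edges Q D"
      proof (cases "a \<in> I")
        case True
        then have "x \<in> D" "x \<notin> Q" using a unfolding Deq Q_def by auto
        then show ?thesis unfolding reverse_edges_def by blast
      next
        case False
        then have "\<pi> a \<in> I" using qI a by blast
        then have "(\<pi> a, \<pi> (\<pi> a)) \<in> D" unfolding Deq by blast
        then have "(\<pi> a, a) \<in> Q" using qN[OF a(2)] a unfolding Q_def by auto
        then have "prod.swap (\<pi> a, a) \<in> prod.swap ` Q" by blast
        then show ?thesis using a unfolding reverse_edges_def by simp
      qed
    qed
    show "reverse_edges Q D \<subseteq> pairing_edges_min N \<pi>"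
    proof
      fix x assume "x \<in> reverse_edges Q D"
      then consider (k) "x \<in> D - Q" | (s) "x \<in> prod.swap ` Q" unfolding reverse_edges_def by blast
      then show "x \<in> pairing_edges_min N \<pi>"
      proof cases
        case k
        then obtain a where a: "a \<in> I" "x = (a, \<pi> a)" "\<not> \<pi> a < a" unfolding Deq Q_def by auto
        have "a < N" using a IN by auto
        then have "a < \<pi> a" using a qN by (metis linorder_neqE_nat)
        then show ?thesis unfolding pairing_edges_min_def using a \<open>a < N\<close> by blast
      next
        case s
        then obtain a where a: "a \<in> I" "x = (\<pi> a, a)" "\<pi> a < a" unfolding Deq Q_def by auto
        have "a < N" using a IN by auto
        then have "\<pi> a < N" "\<pi> (\<pi> a) = a" using qN by auto
        then show ?thesis unfolding pairing_edges_min_def using a by force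
      qed
    qed
  qed
  have rm: "edge_structure (og_nhe X) (reverse_edges Q D) \<and>
    (\<forall>s. Pw s (reverse_edges Q D) *\<^sub>R F (X\<lparr>og_edges := reverse_edges Q D\<rparr>) = Pw s D *\<^sub>R F (X\<lparr>og_edges := D\<rparr>))"
    by (rule rev_many[OF val resp finQ QD]) (use esD in \<open>simp add: N_def\<close>)
  have "(\<Sum>s\<in>states n X. state_sign X s *\<^sub>R
           ((\<Prod>(a, b)\<in>pairing_edges_min N \<pi>. omega (s a) (s b))
             *\<^sub>R F (X\<lparr>og_edges := pairing_edges_min N \<pi>\<rparr>)))
       = (\<Sum>s\<in>states n X. state_sign X s *\<^sub>R (Pw s D *\<^sub>R F (X\<lparr>og_edges := D\<rparr>)))"
    using rm unfolding mineq Pw_def[symmetric] by simp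
  also have "\<dots> = (\<Sum>s\<in>states n X. state_sign X s * Pw s D) *\<^sub>R F (X\<lparr>og_edges := D\<rparr>)"
    by (simp add: scaleR_sum_left)
  also have "(\<Sum>s\<in>states n X. state_sign X s * Pw s D) = (-1) ^ card R * (2 * real n) ^ num_circles N E \<pi>"
    using sum_D[of X \<pi> R n] esX pi RE coh unfolding Pw_def D_def N_def E_def by simp
  finally show ?thesis unfolding Let_def R_def[symmetric] N_def[symmetric] E_def[symmetric] D_def[symmetric]
    by (simp add: mult.commute)
qed


theorem proposition2p23:
  fixes Op :: "nat \<Rightarrow> 'v::real_vector set"
    and act :: "nat \<Rightarrow> (nat \<Rightarrow> nat) \<Rightarrow> 'v \<Rightarrow> 'v"
    and F :: "'v ograph \<Rightarrow> 'w::real_vector"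
    and n :: nat
    and X :: "'v ograph"
  assumes "cyclic_sigma_module Op act"
    and "1 \<le> n"
    and "respects_OG Op act F"
    and "valid_ograph Op X"
  shows "psi_phi n F X = M_op n F X"
proof -
  have "psi_phi n F X = (\<Sum>s\<in>states n X. \<Sum>\<pi>\<in>pairings (og_nhe X). state_sign X s *\<^sub>R
           ((\<Prod>(a, b)\<in>pairing_edges_min (og_nhe X) \<pi>. omega (s a) (s b))
             *\<^sub>R F (X\<lparr>og_edges := pairing_edges_min (og_nhe X) \<pi>\<rparr>)))"
    unfolding psi_phi_def by (simp add: scaleR_sum_right)
  also have "\<dots> = (\<Sum>\<pi>\<in>pairings (og_nhe X). \<Sum>s\<in>states n X. state_sign X s *\<^sub>R
           ((\<Prod>(a, b)\<in>pairing_edges_min (og_nhe X) \<pi>. omega (s a) (s b))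
             *\<^sub>R F (X\<lparr>og_edges := pairing_edges_min (og_nhe X) \<pi>\<rparr>)))"
    by (rule sum.swap)
  also have "\<dots> = M_op n F X"
    unfolding M_op_def by (rule sum.cong[OF refl]) (rule per_pi[OF assms(4) assms(3)])
  finally show ?thesis .
qed



end
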